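(* Let $n\geqslant 3$, let $S$ be a caterpillar species tree with canonical label vector $(s_1,\dots,s_n)$, and let $k_s,k_\ell\in\{1,\dots,n\}$ with $k_s<k_\ell$ and $k_\ell\neq 2$. Let $G$ be the caterpillar gene tree obtained from $S$ by reverse incrementation on positions $k_s,\dots,k_\ell$, i.e. with canonical label vector $(g_1,\dots,g_n)$ given by $g_k=s_{k+1}$ for $k_s\leqslant k<k_\ell$, $g_{k_\ell}=s_{k_s}$, and $g_k=s_k$ for $k\notin\{k_s,\dots,k_\ell\}$. Then the roadblock set $B_{G,S}$ consists of a set of consecutive points on the diagonal of the square lattice, i.e. $B_{G,S}=\{(i,i): a\leqslant i\leqslant b\}$ for some integers $a\leqslant b$.
   Context: All trees are binary, rooted, leaf-labeled. A caterpillar tree with $n$ leaves is one in which some internal node is descended from all other internal nodes. Its canonical label vector $(x_1,\dots,x_n)$ has $x_1,x_2$ the labels of the two leaves of the cherry (unique internal node with two descendant leaves) and, for $3\leqslant i\leqslant n$, $x_i$ the label of the leaf separated from the root by $n-i+1$ edges; vectors differing only by swapping $x_1,x_2$ describe the same tree. For caterpillars $G,S$ with canonical vectors $\mathbf g,\mathbf s$, let $\sigma(x)$ be the index of label $x$ in $\mathbf s$, $F(j)=\max\{\sigma(g_1),\dots,\sigma(g_{j+1})\}-1$ for $1\leqslant j\leqslant n-1$, and define the roadblock set $B_{G,S}=\{(i,j)\in\mathbb Z^2:1\leqslant j\leqslant i\leqslant n-1,\ i<F(j)\}$. *)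

theory Defs
  imports Main
begin

text \<open>A caterpillar with n leaves is represented by its canonical label vector
  (x_1,...,x_n), modelled as a function x :: nat => 'a that is injective on {1..n}.\<close>

definition caterpillar_vec :: "nat \<Rightarrow> (nat \<Rightarrow> 'a) \<Rightarrow> bool" where
  "caterpillar_vec n x \<longleftrightarrow> inj_on x {1..n}"

definition cat_index :: "nat \<Rightarrow> (nat \<Rightarrow> 'a) \<Rightarrow> 'a \<Rightarrow> nat" where
  "cat_index n s x = (THE i. i \<in> {1..n} \<and> s i = x)"

definition roadF :: "nat \<Rightarrow> (nat \<Rightarrow> 'a) \<Rightarrow> (nat \<Rightarrow> 'a) \<Rightarrow> int \<Rightarrow> int" where
  "roadF n g s j = int (Max ((\<lambda>k. cat_index n s (g k)) ` {1..nat j + 1})) - 1"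

definition roadblock :: "nat \<Rightarrow> (nat \<Rightarrow> 'a) \<Rightarrow> (nat \<Rightarrow> 'a) \<Rightarrow> (int \<times> int) set" where
  "roadblock n g s = {(i, j). 1 \<le> j \<and> j \<le> i \<and> i \<le> int n - 1 \<and> i < roadF n g s j}"

end

theory Submission
  imports Defs
begin

lemma cat_index_s:
  assumes "inj_on s {1..n}" "i \<in> {1..n}"
  shows "cat_index n s (s i) = i"
  unfolding cat_index_def
  using assms by (intro the_equality) (auto dest: inj_onD)

theorem proposition7:
  fixes n ks kl :: nat and s g :: "nat \<Rightarrow> 'a"
  assumes "n \<ge> 3"
    and "caterpillar_vec n s"
    and "ks \<in> {1..n}" and "kl \<in> {1..n}" and "ks < kl" and "kl \<noteq> 2"
    and "\<forall>k\<in>{1..n}. g k = (if ks \<le> k \<and> k < kl then s (k + 1)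
                           else if k = kl then s ks else s k)"
  shows "\<exists>a b :: int. a \<le> b \<and> roadblock n g s = {(i, i) | i. a \<le> i \<and> i \<le> b}"
proof -
  define f where "f k = (if ks \<le> k \<and> k < kl then k + 1 else if k = kl then ks else k)" for k
  have inj: "inj_on s {1..n}" using assms(2) unfolding caterpillar_vec_def .
  have sig: "cat_index n s (g k) = f k" if "k \<in> {1..n}" for k
    using that assms(3-7) cat_index_s[OF inj] unfolding f_def by auto
  have mx: "Max ((\<lambda>k. cat_index n s (g k)) ` {1..m}) = (if ks \<le> m \<and> m < kl then m + 1 else m)"
    if "1 \<le> m" "m \<le> n" for m
  proof -
    have "(\<lambda>k. cat_index n s (g k)) ` {1..m} = f ` {1..m}"
      using sig that by (intro image_cong) auto
    moreover have "Max (f ` {1..m}) = (if ks \<le> m \<and> m < kl then m + 1 else m)"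
    proof (rule Max_eqI)
      show "finite (f ` {1..m})" by simp
      show "y \<le> (if ks \<le> m \<and> m < kl then m + 1 else m)" if "y \<in> f ` {1..m}" for y
        using that assms(5) unfolding f_def by auto
      show "(if ks \<le> m \<and> m < kl then m + 1 else m) \<in> f ` {1..m}"
      proof (cases "ks \<le> m \<and> m < kl")
        case True then show ?thesis using that unfolding f_def
          by (intro image_eqI[of _ _ m]) auto
      next
        case F: False
        show ?thesis
        proof (cases "m = kl")
          case True then show ?thesis using F that assms(3,5) unfolding f_def
            by (intro image_eqI[of _ _ "kl - 1"]) auto
        next
          case False then show ?thesis using F that assms(5) unfolding f_def
            by (intro image_eqI[of _ _ m]) auto
        qed
      qed
    qed
    ultimately show ?thesis by simp
  qed
  have F: "roadF n g s j = (if int ks \<le> j + 1 \<and> j + 1 < int kl then j + 1 else j)"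
    if "1 \<le> j" "j \<le> int n - 1" for j
  proof -
    have "nat j + 1 \<le> n" "1 \<le> nat j + 1" using that by auto
    from mx[OF this(2,1)] show ?thesis unfolding roadF_def using that by auto
  qed
  have kl3: "kl \<ge> 3" using assms(3,5,6) by auto
  show ?thesis
  proof (intro exI conjI)
    show "max 1 (int ks - 1) \<le> int kl - 2" using kl3 assms(5) by auto
    show "roadblock n g s = {(i, i) |i. max 1 (int ks - 1) \<le> i \<and> i \<le> int kl - 2}"
    proof (intro set_eqI iffI)
      fix p assume "p \<in> roadblock n g s"
      then obtain i j where p: "p = (i, j)" "1 \<le> j" "j \<le> i" "i \<le> int n - 1" "i < roadF n g s j"
        unfolding roadblock_def by auto
      then have "j \<le> int n - 1" by auto
      with F[OF p(2) this] p show "p \<in> {(i, i) |i. max 1 (int ks - 1) \<le> i \<and> i \<le> int kl - 2}"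
        by (auto split: if_splits)
    next
      fix p assume "p \<in> {(i, i) |i. max 1 (int ks - 1) \<le> i \<and> i \<le> int kl - 2}"
      then obtain i where p: "p = (i, i)" "1 \<le> i" "int ks - 1 \<le> i" "i \<le> int kl - 2" by auto
      have "i \<le> int n - 1" using p assms(4) by auto
      with F[OF p(2) this] p show "p \<in> roadblock n g s"
        unfolding roadblock_def by auto
    qed
  qed
qed

end
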